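(* Let $k\ge4$ be an integer and $\eta\in[\pi/k,\eta_k)$. If $\arg z_{2k-3}\in(0,\eta]$, then $z_{2k-2}\in\triangle(0,z_0,1)$, $z_{2k-1}\in\triangle(0,z_1,z_0)$, $w_{2k-2}\in\triangle(1,w_0,a)$ and $w_{2k-1}\in\triangle(1,w_1,w_0)$. If $\arg z_{2k-3}\in(\eta,2\eta]$, then $z_{2k-2}\in\triangle(0,1,z_{2k-3})$, $z_{2k-1}\in\triangle(0,z_0,1)$, $w_{2k-2}\in\triangle(1,a,w_{2k-3})$ and $w_{2k-1}\in\triangle(1,w_0,a)$.
   Context: For $\eta\in(0,\pi/3)$ let $a=\frac{e^{-i\eta}}{2\cos\eta}$, $c=\frac{1}{1-|a|^4}$, and for integers $j\ge0$ put $z_j=ca^{j+1}$, $w_j=1-c|a|^2a^j$. $\arg$ takes values in $[0,2\pi)$ (under the hypotheses $\arg z_{2k-3}=2\pi-(2k-2)\eta\in(0,2\eta]$). For integers $k\ge1$ let $\Phi_k(\eta)=(1-|a|^4)\sin((k-1)\eta)-|a|^3\sin((k-2)\eta)+|a|^k\sin\eta$; for each $k\ge4$, $\Phi_k$ has a unique zero in $(\pi/k,\pi/(k-1))$, denoted $\eta_k$. $\triangle(u,v,w)$ is the closed solid triangle with vertices $u,v,w$. *)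

theory Defs
  imports "HOL-Analysis.Analysis"
begin

definition aa :: "real \<Rightarrow> complex" where
  "aa \<eta> = exp (- \<i> * complex_of_real \<eta>) / complex_of_real (2 * cos \<eta>)"

definition cc :: "real \<Rightarrow> real" where
  "cc \<eta> = 1 / (1 - cmod (aa \<eta>) ^ 4)"

definition zz :: "real \<Rightarrow> nat \<Rightarrow> complex" where
  "zz \<eta> j = complex_of_real (cc \<eta>) * aa \<eta> ^ (j + 1)"

definition ww :: "real \<Rightarrow> nat \<Rightarrow> complex" where
  "ww \<eta> j = 1 - complex_of_real (cc \<eta> * cmod (aa \<eta>) ^ 2) * aa \<eta> ^ j"

definition arg0 :: "complex \<Rightarrow> real" where
  "arg0 z = (if Arg z < 0 then Arg z + 2 * pi else Arg z)"

definition Phi :: "nat \<Rightarrow> real \<Rightarrow> real" where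
  "Phi k \<eta> = (1 - cmod (aa \<eta>) ^ 4) * sin ((real k - 1) * \<eta>)
      - cmod (aa \<eta>) ^ 3 * sin ((real k - 2) * \<eta>) + cmod (aa \<eta>) ^ k * sin \<eta>"

text \<open>The unique zero of Phi k in (pi/k, pi/(k-1)), for k >= 4.\<close>
definition eta_k :: "nat \<Rightarrow> real" where
  "eta_k k = (THE \<eta>. \<eta> \<in> {pi / real k <..< pi / (real k - 1)} \<and> Phi k \<eta> = 0)"

definition tri :: "complex \<Rightarrow> complex \<Rightarrow> complex \<Rightarrow> complex set" where
  "tri u v w = convex hull {u, v, w}"

end

theory Submission
  imports Defs
begin



lemma tri_affine:
  fixes b m p q1 q2 q3 :: complex
  assumes "p \<in> tri q1 q2 q3"
  shows "b + m * p \<in> tri (b + m*q1) (b + m*q2) (b + m*q3)"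
proof -
  from assms obtain x y z where h: "0 \<le> x" "0 \<le> y" "0 \<le> z" "x + y + z = 1"
      "p = x *\<^sub>R q1 + y *\<^sub>R q2 + z *\<^sub>R q3"
    unfolding tri_def convex_hull_3 by blast
  have "b + m * p = x *\<^sub>R (b + m*q1) + y *\<^sub>R (b + m*q2) + z *\<^sub>R (b + m*q3)"
  proof -
    have "b = (x + y + z) *\<^sub>R b" using h(4) by simp
    then show ?thesis unfolding h(5) scaleR_conv_of_real
      by (simp add: algebra_simps)
  qed
  then show ?thesis unfolding tri_def convex_hull_3 using h by blast
qed

lemma tri0_polar:
  fixes \<rho> R1 R2 \<phi> t1 t2 :: real
  assumes D: "sin (t2 - t1) > 0" and R: "R1 > 0" "R2 > 0"
    and s: "0 \<le> \<rho> * sin (t2 - \<phi>)" and t: "0 \<le> \<rho> * sin (\<phi> - t1)"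
    and sum: "\<rho> * sin (t2 - \<phi>) / R1 + \<rho> * sin (\<phi> - t1) / R2 \<le> sin (t2 - t1)"
  shows "complex_of_real \<rho> * cis \<phi> \<in> tri 0 (complex_of_real R1 * cis t1) (complex_of_real R2 * cis t2)"
proof -
  define d where "d = sin (t2 - t1)"
  define x where "x = \<rho> * sin (t2 - \<phi>) / (R1 * d)"
  define y where "y = \<rho> * sin (\<phi> - t1) / (R2 * d)"
  have d0: "d > 0" using D d_def by simp
  have x0: "0 \<le> x" unfolding x_def using s R d0 by simp
  have y0: "0 \<le> y" unfolding y_def using t R d0 by simp
  have xy: "x + y \<le> 1"
  proof -
    have "x + y = (\<rho> * sin (t2 - \<phi>) / R1 + \<rho> * sin (\<phi> - t1) / R2) / d"
      unfolding x_def y_def using R d0 by (simp add: field_simps)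
    also have "\<dots> \<le> 1" using sum d0 d_def by simp
    finally show ?thesis .
  qed
  have id1: "sin (t2 - \<phi>) * cos t1 + sin (\<phi> - t1) * cos t2 = d * cos \<phi>"
    unfolding d_def sin_diff by (simp add: algebra_simps)
  have id2: "sin (t2 - \<phi>) * sin t1 + sin (\<phi> - t1) * sin t2 = d * sin \<phi>"
    unfolding d_def sin_diff by (simp add: algebra_simps)
  have eq: "complex_of_real \<rho> * cis \<phi> = (1 - x - y) *\<^sub>R 0 + x *\<^sub>R (complex_of_real R1 * cis t1) + y *\<^sub>R (complex_of_real R2 * cis t2)"
  proof (rule complex_eqI)
    show "Re (complex_of_real \<rho> * cis \<phi>) = Re ((1 - x - y) *\<^sub>R 0 + x *\<^sub>R (complex_of_real R1 * cis t1) + y *\<^sub>R (complex_of_real R2 * cis t2))"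
      using R d0 id1 unfolding x_def y_def by (simp add: field_simps) (metis mult.assoc mult.commute distrib_left)
    show "Im (complex_of_real \<rho> * cis \<phi>) = Im ((1 - x - y) *\<^sub>R 0 + x *\<^sub>R (complex_of_real R1 * cis t1) + y *\<^sub>R (complex_of_real R2 * cis t2))"
      using R d0 id2 unfolding x_def y_def by (simp add: field_simps) (metis mult.assoc mult.commute distrib_left)
  qed
  show ?thesis unfolding tri_def convex_hull_3
    using x0 y0 xy eq by (intro CollectI exI[of _ "1-x-y"] exI[of _ x] exI[of _ y]) auto
qed




definition rr :: "real \<Rightarrow> real" where "rr \<eta> = 1 / (2 * cos \<eta>)"

lemma aa_polar: "cos \<eta> > 0 \<Longrightarrow> aa \<eta> = complex_of_real (rr \<eta>) * cis (- \<eta>)"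
  unfolding aa_def rr_def cis_conv_exp by (simp add: field_simps)

lemma cmod_aa: "cos \<eta> > 0 \<Longrightarrow> cmod (aa \<eta>) = rr \<eta>"
proof -
  assume c: "cos \<eta> > 0"
  have "cmod (aa \<eta>) = cmod (complex_of_real (rr \<eta>) * cis (- \<eta>))" by (simp only: aa_polar[OF c])
  also have "\<dots> = rr \<eta>" using c by (simp only: norm_mult norm_of_real norm_cis rr_def) simp
  finally show ?thesis .
qed

lemma cc_r: "cos \<eta> > 0 \<Longrightarrow> cc \<eta> = 1 / (1 - rr \<eta> ^ 4)"
  by (simp add: cc_def cmod_aa)

lemma aa_pow: "cos \<eta> > 0 \<Longrightarrow> aa \<eta> ^ n = complex_of_real (rr \<eta> ^ n) * cis (- (real n * \<eta>))"
proof -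
  assume c: "cos \<eta> > 0"
  have "aa \<eta> ^ n = complex_of_real (rr \<eta>) ^ n * cis (- \<eta>) ^ n"
    by (simp only: aa_polar[OF c] power_mult_distrib)
  also have "\<dots> = complex_of_real (rr \<eta> ^ n) * cis (real n * (- \<eta>))"
    by (simp only: Complex.DeMoivre of_real_power)
  finally show ?thesis by simp
qed

lemma zz_polar: "cos \<eta> > 0 \<Longrightarrow>
   zz \<eta> j = complex_of_real (cc \<eta> * rr \<eta> ^ (j+1)) * cis (- (real (j+1) * \<eta>))"
  unfolding zz_def by (simp only: aa_pow) simp

lemma cnj_aa_mult: "cnj (aa \<eta>) * aa \<eta> = complex_of_real (cmod (aa \<eta>) ^ 2)"
  using complex_norm_square[of "aa \<eta>"] by (simp add: mult.commute)

lemma ww_T: "ww \<eta> j = 1 + (- cnj (aa \<eta>)) * zz \<eta> j"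
proof -
  have "cnj (aa \<eta>) * zz \<eta> j = complex_of_real (cc \<eta> * cmod (aa \<eta>) ^ 2) * aa \<eta> ^ j"
    unfolding zz_def using cnj_aa_mult[of \<eta>] by (simp add: algebra_simps)
  then show ?thesis unfolding ww_def by simp
qed

lemma aa_T: "cos \<eta> > 0 \<Longrightarrow> aa \<eta> = 1 + (- cnj (aa \<eta>)) * 1"
proof -
  assume c: "cos \<eta> > 0"
  have "aa \<eta> + cnj (aa \<eta>) = 1"
    unfolding aa_polar[OF c] using c by (simp add: complex_eq_iff rr_def)
  then show ?thesis by (simp add: algebra_simps)
qed




lemma sin_between: "0 \<le> x \<Longrightarrow> x \<le> e \<Longrightarrow> e \<le> pi/2 \<Longrightarrow> 0 \<le> sin x \<and> sin x \<le> sin e"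
  by (auto intro!: sin_ge_zero sin_monotone_2pi_le)

lemma cis_m2pi: "cis (x - 2*pi) = cis x"
  by (simp add: complex_eq_iff cos_diff sin_diff)

lemma geo:
  fixes k :: nat and \<eta> \<alpha> r c :: real
  assumes k4: "k \<ge> 4" and co: "cos \<eta> > 0" and e0: "0 < \<eta>" "\<eta> < pi/2"
    and al: "\<alpha> = 2*pi - (2*real k - 2)*\<eta>" "0 < \<alpha>" "\<alpha> \<le> 2*\<eta>" "\<alpha> \<le> pi/2"
    and r: "r = rr \<eta>" "r < 1" and c: "c = cc \<eta>"
    and Q1: "r^(2*k-2) * (1 + c*r) \<le> 1"
    and Q2: "\<eta> < \<alpha> \<Longrightarrow> c * r^(2*k-1) * sin \<eta> + r * sin (\<alpha> - \<eta>) \<le> sin \<alpha>"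
  shows "arg0 (zz \<eta> (2*k-3)) = \<alpha>"
    and "\<alpha> \<le> \<eta> \<Longrightarrow> zz \<eta> (2*k-2) \<in> tri 0 (zz \<eta> 0) 1 \<and>
            zz \<eta> (2*k-1) \<in> tri 0 (zz \<eta> 1) (zz \<eta> 0) \<and>
            ww \<eta> (2*k-2) \<in> tri 1 (ww \<eta> 0) (aa \<eta>) \<and>
            ww \<eta> (2*k-1) \<in> tri 1 (ww \<eta> 1) (ww \<eta> 0)"
    and "\<eta> < \<alpha> \<Longrightarrow> zz \<eta> (2*k-2) \<in> tri 0 1 (zz \<eta> (2*k-3)) \<and>
            zz \<eta> (2*k-1) \<in> tri 0 (zz \<eta> 0) 1 \<and>
            ww \<eta> (2*k-2) \<in> tri 1 (aa \<eta>) (ww \<eta> (2*k-3)) \<and>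
            ww \<eta> (2*k-1) \<in> tri 1 (ww \<eta> 0) (aa \<eta>)"
proof -
  define n where "n = 2*k-2"
  have n1: "2*k-1 = n+1" "2*k-3+1 = n" "2*k-2+1 = n+1" "2*k-1+1 = n+2" and rn: "real n = 2*real k - 2"
    using k4 unfolding n_def by auto
  have rk: "real k = (real n + 2)/2" using rn by simp
  have r0: "r > 0" unfolding r rr_def using co by simp
  have r4: "r^4 < 1" using r0 r(2) by (simp add: power_less_one_iff)
  have cdef: "c = 1/(1 - r^4)" using c r cc_r[OF co] by simp
  have c1: "c \<ge> 1" unfolding cdef using r4 r0 by (simp add: field_simps)
  have se: "sin \<eta> > 0" using e0 by (intro sin_gt_zero) auto
  have z3: "zz \<eta> (2*k-3) = complex_of_real (c*r^n) * cis \<alpha>"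
  proof -
    have "- (real (2*k-3+1) * \<eta>) = \<alpha> - 2*pi" unfolding n1 rn al(1) by simp
    then show ?thesis unfolding zz_polar[OF co] n1 using cis_m2pi r c by simp
  qed
  have z2: "zz \<eta> (2*k-2) = complex_of_real (c*r^(n+1)) * cis (\<alpha> - \<eta>)"
  proof -
    have "- (real (2*k-2+1) * \<eta>) = (\<alpha> - \<eta>) - 2*pi" unfolding n1 al(1) rk by (simp add: algebra_simps)
    then show ?thesis unfolding zz_polar[OF co] n1 using cis_m2pi r c by simp
  qed
  have z1: "zz \<eta> (2*k-1) = complex_of_real (c*r^(n+2)) * cis (\<alpha> - 2*\<eta>)"
  proof -
    have "- (real (2*k-1+1) * \<eta>) = (\<alpha> - 2*\<eta>) - 2*pi" unfolding n1 al(1) rk by (simp add: algebra_simps)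
    then show ?thesis unfolding zz_polar[OF co] n1 using cis_m2pi r c by simp
  qed
  have zA: "zz \<eta> 0 = complex_of_real (c*r) * cis (- \<eta>)"
    unfolding zz_polar[OF co] using r c by simp
  have zB: "zz \<eta> 1 = complex_of_real (c*r^2) * cis (- (2*\<eta>))"
    unfolding zz_polar[OF co] using r c by (simp add: numeral_2_eq_2)
  have one: "(1::complex) = complex_of_real 1 * cis 0" by simp
  show "arg0 (zz \<eta> (2*k-3)) = \<alpha>"
  proof -
    have "Arg (zz \<eta> (2*k-3)) = \<alpha>"
      by (rule Arg_unique'[of "c*r^n"]) (use c1 r0 al in \<open>auto simp: z3 rcis_def\<close>)
    then show ?thesis unfolding arg0_def using al by simp
  qed
  define m where "m = - cnj (aa \<eta>)"
  have E: "\<And>j. 1 + m * zz \<eta> j = ww \<eta> j" "1 + m * 1 = aa \<eta>" "1 + m * 0 = 1"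
    unfolding m_def using ww_T aa_T[OF co] by auto
  have Qa: "r^n * (1 + c*r) \<le> 1" using Q1 n_def by simp
  have rn0: "r^n \<ge> 0" "r^(n+1) \<ge> 0" "c*r^(n+1) \<ge> 0" using r0 c1 by auto
  show "\<alpha> \<le> \<eta> \<Longrightarrow> zz \<eta> (2*k-2) \<in> tri 0 (zz \<eta> 0) 1 \<and>
            zz \<eta> (2*k-1) \<in> tri 0 (zz \<eta> 1) (zz \<eta> 0) \<and>
            ww \<eta> (2*k-2) \<in> tri 1 (ww \<eta> 0) (aa \<eta>) \<and>
            ww \<eta> (2*k-1) \<in> tri 1 (ww \<eta> 1) (ww \<eta> 0)"
  proof -
    assume ae: "\<alpha> \<le> \<eta>"
    have sA: "0 \<le> sin (\<eta> - \<alpha>)" "sin (\<eta> - \<alpha>) \<le> sin \<eta>" using sin_between[of "\<eta> - \<alpha>" \<eta>] ae al e0 by auto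
    have sB: "0 \<le> sin \<alpha>" "sin \<alpha> \<le> sin \<eta>" using sin_between[of "\<alpha>" \<eta>] ae al e0 by auto
    have key: "r^n * sin (\<eta> - \<alpha>) + c*r^(n+1) * sin \<alpha> \<le> sin \<eta>"
    proof -
      have "r^n * sin (\<eta> - \<alpha>) + c*r^(n+1) * sin \<alpha> \<le> r^n * sin \<eta> + c*r^(n+1) * sin \<eta>"
        using sA sB rn0 by (intro add_mono mult_left_mono) auto
      also have "\<dots> = (r^n * (1 + c*r)) * sin \<eta>" by (simp add: algebra_simps)
      also have "\<dots> \<le> sin \<eta>" using Qa se by (simp add: mult_le_cancel_right1)
      finally show ?thesis .
    qed
    have T1: "zz \<eta> (2*k-2) \<in> tri 0 (zz \<eta> 0) 1"
    proof -
      have "complex_of_real (c*r^(n+1)) * cis (\<alpha> - \<eta>) \<in> tri 0 (complex_of_real (c*r) * cis (- \<eta>)) (complex_of_real 1 * cis 0)"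
      proof (rule tri0_polar)
        show "0 < sin (0 - - \<eta>)" using se by simp
        show "0 < c*r" "0 < (1::real)" using c1 r0 by auto
        show "0 \<le> c * r ^ (n + 1) * sin (0 - (\<alpha> - \<eta>))" using sA rn0 by simp
        show "0 \<le> c * r ^ (n + 1) * sin (\<alpha> - \<eta> - - \<eta>)" using sB rn0 by simp
        have "c * r ^ (n + 1) * sin (0 - (\<alpha> - \<eta>)) / (c * r) = r^n * sin (\<eta> - \<alpha>)"
          using c1 r0 by (simp add: field_simps)
        then show "c * r ^ (n + 1) * sin (0 - (\<alpha> - \<eta>)) / (c * r) + c * r ^ (n + 1) * sin (\<alpha> - \<eta> - - \<eta>) / 1 \<le> sin (0 - - \<eta>)"
          using key by simp
      qed
      then show ?thesis using z2 zA by simp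
    qed
    have T2: "zz \<eta> (2*k-1) \<in> tri 0 (zz \<eta> 1) (zz \<eta> 0)"
    proof -
      have "complex_of_real (c*r^(n+2)) * cis (\<alpha> - 2*\<eta>) \<in> tri 0 (complex_of_real (c*r^2) * cis (- (2*\<eta>))) (complex_of_real (c*r) * cis (- \<eta>))"
      proof (rule tri0_polar)
        show "0 < sin (- \<eta> - - (2*\<eta>))" using se by simp
        show "0 < c*r^2" "0 < c*r" using c1 r0 by auto
        show "0 \<le> c * r ^ (n + 2) * sin (- \<eta> - (\<alpha> - 2*\<eta>))" using sA rn0 r0 c1 by simp
        show "0 \<le> c * r ^ (n + 2) * sin (\<alpha> - 2*\<eta> - - (2*\<eta>))" using sB rn0 r0 c1 by simp
        have e1: "c * r ^ (n + 2) * sin (- \<eta> - (\<alpha> - 2*\<eta>)) / (c * r^2) = r^n * sin (\<eta> - \<alpha>)"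
          using c1 r0 by (simp add: field_simps power2_eq_square)
        have e2: "c * r ^ (n + 2) * sin (\<alpha> - 2*\<eta> - - (2*\<eta>)) / (c * r) = r^(n+1) * sin \<alpha>"
          using c1 r0 by (simp add: field_simps)
        have "r^(n+1) * sin \<alpha> \<le> c*r^(n+1) * sin \<alpha>" using c1 sB rn0 by (intro mult_right_mono) (auto intro: mult_right_mono[of 1 c, simplified])
        then show "c * r ^ (n + 2) * sin (- \<eta> - (\<alpha> - 2*\<eta>)) / (c * r^2) + c * r ^ (n + 2) * sin (\<alpha> - 2*\<eta> - - (2*\<eta>)) / (c*r) \<le> sin (- \<eta> - - (2*\<eta>))"
          unfolding e1 e2 using key by simp
      qed
      then show ?thesis using z1 zA zB by simp
    qed
    have T3: "ww \<eta> (2*k-2) \<in> tri 1 (ww \<eta> 0) (aa \<eta>)"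
      using tri_affine[OF T1, of 1 m] by (simp only: E)
    have T4: "ww \<eta> (2*k-1) \<in> tri 1 (ww \<eta> 1) (ww \<eta> 0)"
      using tri_affine[OF T2, of 1 m] by (simp only: E)
    show ?thesis using T1 T2 T3 T4 by blast
  qed
  show "\<eta> < \<alpha> \<Longrightarrow> zz \<eta> (2*k-2) \<in> tri 0 1 (zz \<eta> (2*k-3)) \<and>
            zz \<eta> (2*k-1) \<in> tri 0 (zz \<eta> 0) 1 \<and>
            ww \<eta> (2*k-2) \<in> tri 1 (aa \<eta>) (ww \<eta> (2*k-3)) \<and>
            ww \<eta> (2*k-1) \<in> tri 1 (ww \<eta> 0) (aa \<eta>)"
  proof -
    assume ea: "\<eta> < \<alpha>"
    have sA: "0 \<le> sin (2*\<eta> - \<alpha>)" "sin (2*\<eta> - \<alpha>) \<le> sin \<eta>" using sin_between[of "2*\<eta> - \<alpha>" \<eta>] ea al e0 by auto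
    have sB: "0 \<le> sin (\<alpha> - \<eta>)" "sin (\<alpha> - \<eta>) \<le> sin \<eta>" using sin_between[of "\<alpha> - \<eta>" \<eta>] ea al e0 by auto
    have sa: "sin \<alpha> > 0" using al by (intro sin_gt_zero) auto
    have T1: "zz \<eta> (2*k-2) \<in> tri 0 1 (zz \<eta> (2*k-3))"
    proof -
      have "complex_of_real (c*r^(n+1)) * cis (\<alpha> - \<eta>) \<in> tri 0 (complex_of_real 1 * cis 0) (complex_of_real (c*r^n) * cis \<alpha>)"
      proof (rule tri0_polar)
        show "0 < sin (\<alpha> - 0)" using sa by simp
        show "0 < (1::real)" "0 < c*r^n" using c1 r0 by auto
        show "0 \<le> c * r ^ (n + 1) * sin (\<alpha> - (\<alpha> - \<eta>))" using se rn0 by simp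
        show "0 \<le> c * r ^ (n + 1) * sin (\<alpha> - \<eta> - 0)" using sB rn0 by simp
        have e2: "c * r ^ (n + 1) * sin (\<alpha> - \<eta> - 0) / (c * r^n) = r * sin (\<alpha> - \<eta>)"
          using c1 r0 by (simp add: field_simps)
        show "c * r ^ (n + 1) * sin (\<alpha> - (\<alpha> - \<eta>)) / 1 + c * r ^ (n + 1) * sin (\<alpha> - \<eta> - 0) / (c * r^n) \<le> sin (\<alpha> - 0)"
          unfolding e2 using Q2[OF ea] n1 by simp
      qed
      then show ?thesis using z2 z3 by simp
    qed
    have T2: "zz \<eta> (2*k-1) \<in> tri 0 (zz \<eta> 0) 1"
    proof -
      have "complex_of_real (c*r^(n+2)) * cis (\<alpha> - 2*\<eta>) \<in> tri 0 (complex_of_real (c*r) * cis (- \<eta>)) (complex_of_real 1 * cis 0)"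
      proof (rule tri0_polar)
        show "0 < sin (0 - - \<eta>)" using se by simp
        show "0 < c*r" "0 < (1::real)" using c1 r0 by auto
        show "0 \<le> c * r ^ (n + 2) * sin (0 - (\<alpha> - 2*\<eta>))" using sA rn0 r0 c1 by simp
        show "0 \<le> c * r ^ (n + 2) * sin (\<alpha> - 2*\<eta> - - \<eta>)" using sB rn0 r0 c1 by simp
        have e1: "c * r ^ (n + 2) * sin (0 - (\<alpha> - 2*\<eta>)) / (c * r) = r^(n+1) * sin (2*\<eta> - \<alpha>)"
          using c1 r0 by (simp add: field_simps)
        have e2: "c * r ^ (n + 2) * sin (\<alpha> - 2*\<eta> - - \<eta>) / 1 = c*r^(n+2) * sin (\<alpha> - \<eta>)"
          by (simp add: algebra_simps)
        have "r^(n+1) * sin (2*\<eta> - \<alpha>) + c*r^(n+2) * sin (\<alpha> - \<eta>) \<le> r^(n+1) * sin \<eta> + c*r^(n+2) * sin \<eta>"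
          using sA sB rn0 r0 c1 by (intro add_mono mult_left_mono) auto
        also have "\<dots> = r * ((r^n * (1 + c*r)) * sin \<eta>)" by (simp add: algebra_simps)
        also have "\<dots> \<le> 1 * (1 * sin \<eta>)"
          using Qa se r0 r(2) c1 by (intro mult_mono) (auto simp: mult_le_cancel_right1)
        finally show "c * r ^ (n + 2) * sin (0 - (\<alpha> - 2*\<eta>)) / (c * r) + c * r ^ (n + 2) * sin (\<alpha> - 2*\<eta> - - \<eta>) / 1 \<le> sin (0 - - \<eta>)"
          unfolding e1 e2 by simp
      qed
      then show ?thesis using z1 zA by simp
    qed
    have T3: "ww \<eta> (2*k-2) \<in> tri 1 (aa \<eta>) (ww \<eta> (2*k-3))"
      using tri_affine[OF T1, of 1 m] by (simp only: E)
    have T4: "ww \<eta> (2*k-1) \<in> tri 1 (ww \<eta> 0) (aa \<eta>)"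
      using tri_affine[OF T2, of 1 m] by (simp only: E)
    show ?thesis using T1 T2 T3 T4 by blast
  qed
qed




definition P :: "nat \<Rightarrow> real \<Rightarrow> real" where
  "P k x = (1 - rr x ^ 4) * sin ((real k - 1) * x) - rr x ^ 3 * sin ((real k - 2) * x) + rr x ^ k * sin x"

lemma Phi_P: "cos x > 0 \<Longrightarrow> Phi k x = P k x"
  unfolding Phi_def P_def by (simp add: cmod_aa)

lemma rr_deriv: "cos x > 0 \<Longrightarrow> (rr has_real_derivative (2 * sin x * rr x ^ 2)) (at x)"
  unfolding rr_def
  by (rule derivative_eq_intros refl | simp)+ (simp add: field_simps power2_eq_square)

definition Dv :: "nat \<Rightarrow> real \<Rightarrow> real" where
  "Dv k x = (let R = rr x; s = sin x; co = cos x; S1 = sin ((real k - 1) * x); C1 = cos ((real k - 1) * x);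
      S2 = sin ((real k - 2) * x); C2 = cos ((real k - 2) * x) in
     - 4 * R^3 * (2 * s * R^2) * S1 + (1 - R^4) * (real k - 1) * C1 - 3 * R^2 * (2 * s * R^2) * S2
     - R^3 * (real k - 2) * C2 + real k * R^(k-1) * (2 * s * R^2) * s + R^k * co)"

lemma P_deriv: "cos x > 0 \<Longrightarrow> (P k has_real_derivative Dv k x) (at x)"
proof -
  assume c: "cos x > 0"
  note rd = rr_deriv[OF c]
  have rd': "((\<lambda>x. rr x) has_real_derivative (2 * sin x * rr x ^ 2)) (at x)" using rd by simp
  show ?thesis unfolding P_def[abs_def]
    apply (rule derivative_eq_intros rd' refl | simp)+
    unfolding Dv_def Let_def by (simp add: algebra_simps)
qed

lemma pow_bound: "k \<ge> 5 \<Longrightarrow> (real k + 1) * (0.7072::real)^k \<le> 1.1"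
proof (induction k rule: dec_induct)
  case base
  then show ?case by (simp add: power_numeral_reduce)
next
  case (step m)
  have "(real (Suc m) + 1) * (0.7072::real)^(Suc m) = (0.7072 * (real m + 2)) * 0.7072^m" by simp
  also have "\<dots> \<le> (real m + 1) * 0.7072^m"
    using step(1) by (intro mult_right_mono) auto
  finally show ?case using step.IH by linarith
qed

lemma sqrt2_bounds: "7/5 \<le> sqrt (2::real)" "sqrt (2::real) \<le> 3/2"
proof -
  show "7/5 \<le> sqrt (2::real)" by (rule real_le_rsqrt) (simp add: power2_eq_square)
  have "sqrt (2::real) \<le> sqrt ((3/2)^2)" by (rule real_sqrt_le_mono) (simp add: power2_eq_square)
  then show "sqrt (2::real) \<le> 3/2" by simp
qed

lemma cos_3pi4: "cos (3*pi/4) = - (sqrt 2 / 2)"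
proof -
  have "3*pi/4 = pi - pi/4" by simp
  then show ?thesis by (simp only: cos_pi_minus cos_45)
qed

lemma Dv_neg:
  assumes k: "k \<ge> 5" and x: "pi/real k \<le> x" "x \<le> pi/(real k - 1)"
  shows "Dv k x < 0"
proof -
  have kr: "real k \<ge> 5" using k by simp
  have pk0: "pi / real k > 0" using kr by simp
  have x0: "0 < x" using x pk0 by linarith
  have "pi/(real k - 1) \<le> pi/4" using kr by (intro divide_left_mono) auto
  then have x4: "x \<le> pi/4" using x by linarith
  define R where "R = rr x"
  define s where "s = sin x"
  define co where "co = cos x"
  define S1 where "S1 = sin ((real k - 1) * x)"
  define C1 where "C1 = cos ((real k - 1) * x)"
  define S2 where "S2 = sin ((real k - 2) * x)"
  define C2 where "C2 = cos ((real k - 2) * x)"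
  note sq2 = sqrt2_bounds
  have co1: "sqrt 2/2 \<le> co" unfolding co_def cos_45[symmetric]
    using x0 x4 by (intro cos_monotone_0_pi_le) auto
  have co0: "co > 0" using co1 sq2 by linarith
  have co_le: "co \<le> 1" unfolding co_def by simp
  have cosq: "co^2 \<ge> 1/2"
  proof -
    have "(sqrt 2/2)^2 \<le> co^2" using co1 sq2 by (intro power_mono) auto
    then show ?thesis by (simp add: power_divide)
  qed
  have R0: "R > 0" unfolding R_def rr_def using co0 co_def by simp
  have Rco: "R * co = 1/2" unfolding R_def rr_def co_def using co0 co_def by simp
  have R2: "R^2 \<le> 1/2"
  proof -
    have "R^2 = 1 / (4 * co^2)" unfolding R_def rr_def co_def by (simp add: power2_eq_square)
    also have "\<dots> \<le> 1/2" using cosq co0 by (simp add: divide_le_eq)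
    finally show ?thesis .
  qed
  have R1: "R \<le> 0.7072"
  proof (rule ccontr)
    assume "\<not> R \<le> 0.7072"
    then have "0.7072^2 \<le> R^2" by (intro power_mono) auto
    then show False using R2 by (simp add: power2_eq_square)
  qed
  have R4: "R^4 \<le> 1/4"
  proof -
    have "R^4 = (R^2)^2" by simp
    also have "\<dots> \<le> (1/2)^2" using R2 R0 by (intro power_mono) auto
    finally show ?thesis by (simp add: power2_eq_square)
  qed
  have s0: "s > 0" unfolding s_def using x0 x4 by (intro sin_gt_zero) auto
  have ss: "s^2 \<le> 1/2" using cosq unfolding s_def co_def using sin_cos_squared_add[of x] by linarith
  have pi1: "(real k - 1) * x \<le> pi"
  proof -
    have "(real k - 1) * x \<le> (real k - 1) * (pi/(real k - 1))" using x kr by (intro mult_left_mono) auto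
    then show ?thesis using kr by simp
  qed
  have S1: "S1 \<ge> 0" unfolding S1_def using pi1 x0 kr by (intro sin_ge_zero) auto
  have "(real k - 2) * x \<le> (real k - 1) * x" using x0 by (intro mult_right_mono) auto
  then have "(real k - 2) * x \<le> pi" using pi1 by linarith
  then have S2: "S2 \<ge> 0" unfolding S2_def using pi1 x0 kr
    by (intro sin_ge_zero) auto
  have C2: "C2 = C1 * co + S1 * s"
  proof -
    have "(real k - 2) * x = (real k - 1) * x - x" by (simp add: algebra_simps)
    then show ?thesis unfolding C2_def C1_def S1_def co_def s_def by (simp add: cos_diff)
  qed
  have C1: "C1 \<le> - (sqrt 2 / 2)"
  proof -
    have "(real k - 1) * (pi / real k) = pi - pi / real k" using kr by (simp add: field_simps)
    moreover have "pi / real k \<le> pi/4" using kr by (intro divide_left_mono) auto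
    moreover have "(real k - 1) * (pi / real k) \<le> (real k - 1) * x" using x kr by (intro mult_left_mono) auto
    ultimately have "pi - pi / real k \<le> (real k - 1) * x" "pi / real k \<le> pi/4" by argo+
    then have "3*pi/4 \<le> (real k - 1) * x" by linarith
    then have "C1 \<le> cos (3*pi/4)" unfolding C1_def using pi1 by (intro cos_monotone_0_pi_le) auto
    then show ?thesis using cos_3pi4 by simp
  qed
  have pk: "R^(k-1) * R^2 = R^(k+1)"
  proof -
    have "k - 1 + 2 = k + 1" using k by simp
    then show ?thesis by (metis power_add)
  qed
  define K where "K = (1 - R^4) * (real k - 1) - (real k - 2) * (R^3 * co)"
  have eq: "Dv k x = - 8* s*R^5*S1 - 6* s*R^4*S2 - (real k - 2)*R^3* s*S1 + C1 * K
        + 2*real k*(R^(k-1)*R^2)* s^2 + R^k*co"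
    unfolding Dv_def Let_def K_def R_def[symmetric] s_def[symmetric] co_def[symmetric]
      S1_def[symmetric] C1_def[symmetric] S2_def[symmetric] C2_def[symmetric] C2
    by (simp add: algebra_simps power2_eq_square power3_eq_cube power4_eq_xxxx numeral_eq_Suc)
  have K: "K \<ge> (real k - 1) / 2"
  proof -
    have "R^3 * co = R^2 / 2" using Rco by (simp add: power2_eq_square power3_eq_cube)
    then have "K = (1 - R^4) * (real k - 1) - (real k - 2) * R^2 / 2" unfolding K_def by simp
    moreover have "(1 - R^4) * (real k - 1) \<ge> (3/4) * (real k - 1)" using R4 kr by (intro mult_right_mono) auto
    moreover have "(real k - 2) * R^2 / 2 \<le> (real k - 2) * (1/2) / 2" using R2 kr by (intro divide_right_mono mult_left_mono) auto
    ultimately have "K \<ge> 3/4 * (real k - 1) - (real k - 2) * (1/2) / 2"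
      by (metis diff_mono)
    then show ?thesis by (simp add: field_simps)
  qed
  have CK: "C1 * K \<le> - (sqrt 2 / 2) * ((real k - 1) / 2)"
  proof -
    have "C1 * K \<le> - (sqrt 2 / 2) * K" using C1 K kr by (intro mult_right_mono) auto
    also have "\<dots> \<le> - (sqrt 2 / 2) * ((real k - 1) / 2)" using K sq2 by (intro mult_left_mono_neg) auto
    finally show ?thesis .
  qed
  have Neg: "- 8* s*R^5*S1 - 6* s*R^4*S2 - (real k - 2)*R^3* s*S1 \<le> 0"
  proof -
    have "0 \<le> 8* s*R^5*S1" "0 \<le> 6* s*R^4*S2" "0 \<le> (real k - 2)*R^3* s*S1"
      using s0 R0 S1 S2 kr by (intro mult_nonneg_nonneg; simp)+
    then show ?thesis by linarith
  qed
  have Pos1: "2*real k*(R^(k-1)*R^2)* s^2 \<le> real k * R^k"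
  proof -
    have "R^(k+1) \<le> R^k" using R0 R1 by (simp add: power_decreasing)
    then have "2*real k*(R^(k-1)*R^2)* s^2 \<le> 2*real k*R^k* s^2" unfolding pk using kr
      by (intro mult_right_mono mult_left_mono) auto
    also have "\<dots> = real k * R^k * (2* s^2)" by simp
    also have "\<dots> \<le> real k * R^k * 1" using ss R0 by (intro mult_left_mono) auto
    finally show ?thesis by simp
  qed
  have Pos2: "R^k * co \<le> R^k" using co_le R0 by (simp add: mult_left_le)
  have Pk: "(real k + 1) * R^k \<le> 1.1"
  proof -
    have "R^k \<le> 0.7072^k" using R0 R1 by (intro power_mono) auto
    then have "(real k + 1) * R^k \<le> (real k + 1) * 0.7072^k" by (intro mult_left_mono) auto
    then show ?thesis using pow_bound[OF k] by linarith
  qed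
  have Q: "(7/5 / 2) * (4 / 2) \<le> (sqrt 2 / 2) * ((real k - 1) / 2)"
    using sq2 kr by (intro mult_mono) auto
  have CK': "C1 * K \<le> - ((sqrt 2 / 2) * ((real k - 1) / 2))" using CK by simp
  have Pk': "real k * R^k + R^k \<le> 11/10" using Pk by (simp add: algebra_simps)
  show ?thesis using eq Neg CK' Pos1 Pos2 Pk' Q by linarith
qed




lemma rr_facts:
  assumes "0 < x" "x \<le> pi/4"
  shows "rr x > 0" "rr x * cos x = 1/2" "rr x ^ 2 \<le> 1/2" "rr x \<le> 1" "cos x > 0" "rr x \<le> cos x"
    "cos x ^ 2 \<ge> 1/2" "sqrt 2 / 2 \<le> cos x"
proof -
  note sq2 = sqrt2_bounds
  show co1: "sqrt 2/2 \<le> cos x" unfolding cos_45[symmetric]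
    using assms by (intro cos_monotone_0_pi_le) auto
  show co0: "cos x > 0" using co1 sq2 by linarith
  show cosq: "cos x^2 \<ge> 1/2"
  proof -
    have "(sqrt 2/2)^2 \<le> cos x^2" using co1 sq2 by (intro power_mono) auto
    then show ?thesis by (simp add: power_divide)
  qed
  show R0: "rr x > 0" unfolding rr_def using co0 by simp
  show "rr x * cos x = 1/2" unfolding rr_def using co0 by simp
  have "rr x^2 = 1 / (4 * cos x^2)" unfolding rr_def by (simp add: power2_eq_square)
  also have "\<dots> \<le> 1/2" using cosq co0 by (simp add: divide_le_eq)
  finally show R2: "rr x^2 \<le> 1/2" .
  show "rr x \<le> 1"
  proof (rule ccontr)
    assume "\<not> rr x \<le> 1"
    then have "1 \<le> rr x^2" by (simp add: one_le_power)
    then show False using R2 by simp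
  qed
  show "rr x \<le> cos x" unfolding rr_def using co0 cosq by (simp add: divide_le_eq power2_eq_square)
qed

lemma P_pos_start:
  assumes k: "k \<ge> 5"
  shows "P k (pi / real k) > 0"
proof -
  define x where "x = pi / real k"
  have kr: "real k \<ge> 5" using k by simp
  have x0: "0 < x" unfolding x_def using kr by simp
  have x4: "x \<le> pi/4" unfolding x_def using kr by (intro divide_left_mono) auto
  note F = rr_facts[OF x0 x4]
  define R where "R = rr x"
  have e1: "(real k - 1) * x = pi - x" unfolding x_def using kr by (simp add: field_simps)
  have e2: "(real k - 2) * x = pi - 2 * x" unfolding x_def using kr by (simp add: field_simps)
  have "P k x = (1 - R^4) * sin x - R^3 * (2 * sin x * cos x) + R^k * sin x"
    unfolding P_def e1 e2 R_def by (simp add: sin_double)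
  also have "\<dots> = sin x * (1 - R^4 - R^2 * (2 * (R * cos x)) + R^k)"
    by (simp add: algebra_simps power2_eq_square power3_eq_cube)
  also have "\<dots> = sin x * (1 - R^4 - R^2 + R^k)" using F(2) R_def by simp
  finally have eq: "P k x = sin x * (1 - R^4 - R^2 + R^k)" .
  have R4: "R^4 \<le> 1/4"
  proof -
    have "R^4 = (R^2)^2" by simp
    also have "\<dots> \<le> (1/2)^2" using F(1,3) R_def by (intro power_mono) auto
    finally show ?thesis by (simp add: power2_eq_square)
  qed
  have "R^2 \<le> 1/2" "0 \<le> R^k" using F(1,3) R_def by auto
  then have "0 < 1 - R^4 - R^2 + R^k" using R4 by linarith
  moreover have "sin x > 0" using x0 x4 by (intro sin_gt_zero) auto
  ultimately show ?thesis using eq x_def by simp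
qed

lemma P_neg_end:
  assumes k: "k \<ge> 5"
  shows "P k (pi / (real k - 1)) < 0"
proof -
  define x where "x = pi / (real k - 1)"
  have kr: "real k \<ge> 5" using k by simp
  have x0: "0 < x" unfolding x_def using kr by simp
  have x4: "x \<le> pi/4" unfolding x_def using kr by (intro divide_left_mono) auto
  note F = rr_facts[OF x0 x4]
  define R where "R = rr x"
  have e1: "(real k - 1) * x = pi" unfolding x_def using kr by (simp add: field_simps)
  have e2: "(real k - 2) * x = pi - x" unfolding x_def using kr by (simp add: field_simps)
  have eq: "P k x = sin x * (R^k - R^3)"
    unfolding P_def e1 e2 R_def by (simp add: algebra_simps)
  have R1: "R < 1"
  proof -
    have "R^2 < 1" using F(3) R_def by simp
    then show ?thesis using F(1) R_def by (simp add: power_less_one_iff)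
  qed
  have "R^k < R^3" using R1 F(1) R_def k by (intro power_strict_decreasing) auto
  moreover have "sin x > 0" using x0 x4 by (intro sin_gt_zero) auto
  ultimately show ?thesis using eq x_def by (simp add: mult_pos_neg)
qed

lemma P_decr:
  assumes k: "k \<ge> 5" and ab: "pi / real k \<le> a" "a < b" "b \<le> pi / (real k - 1)"
  shows "P k a > P k b"
proof (rule DERIV_neg_imp_decreasing[OF ab(2)])
  fix x assume x: "a \<le> x" "x \<le> b"
  have kr: "real k \<ge> 5" using k by simp
  have "0 < pi / real k" using kr by simp
  then have x0: "0 < x" using x ab by linarith
  have "pi/(real k - 1) \<le> pi/4" using kr by (intro divide_left_mono) auto
  then have x4: "x \<le> pi/4" using x ab by linarith
  have "cos x > 0" using rr_facts[OF x0 x4] by simp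
  then show "\<exists>y. (P k has_real_derivative y) (at x) \<and> y < 0"
    using P_deriv Dv_neg[OF k] x ab by (intro exI[of _ "Dv k x"]) auto
qed

lemma eta_k_ge5:
  assumes k: "k \<ge> 5"
  shows "pi / real k < eta_k k" "eta_k k < pi / (real k - 1)"
proof -
  have kr: "real k \<ge> 5" using k by simp
  define a where "a = pi / real k"
  define b where "b = pi / (real k - 1)"
  have ab: "a < b" unfolding a_def b_def using kr by (intro divide_strict_left_mono) auto
  have a0: "0 < a" unfolding a_def using kr by simp
  have b4: "b \<le> pi/4" unfolding b_def using kr by (intro divide_left_mono) auto
  have cont: "\<forall>x. a \<le> x \<and> x \<le> b \<longrightarrow> isCont (P k) x"
  proof (intro allI impI)
    fix x assume "a \<le> x \<and> x \<le> b"
    then have "cos x > 0" using rr_facts[of x] a0 b4 by auto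
    then show "isCont (P k) x" using P_deriv DERIV_isCont by blast
  qed
  obtain x0 where x0: "a \<le> x0" "x0 \<le> b" "P k x0 = 0"
    using IVT2[of "P k" b 0 a] P_pos_start[OF k] P_neg_end[OF k] ab cont
    unfolding a_def b_def by auto
  have x0a: "x0 \<noteq> a" using x0 P_pos_start[OF k] a_def by auto
  have x0b: "x0 \<noteq> b" using x0 P_neg_end[OF k] b_def by auto
  have Phi_eq: "\<And>x. a \<le> x \<Longrightarrow> x \<le> b \<Longrightarrow> Phi k x = P k x"
    using rr_facts a0 b4 Phi_P by (meson dual_order.trans less_le_not_le)
  have uniq: "\<exists>!x. x \<in> {pi / real k <..< pi / (real k - 1)} \<and> Phi k x = 0"
  proof (rule ex1I[of _ x0])
    show "x0 \<in> {pi / real k <..< pi / (real k - 1)} \<and> Phi k x0 = 0"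
      using x0 x0a x0b Phi_eq unfolding a_def b_def by auto
    fix y assume y: "y \<in> {pi / real k <..< pi / (real k - 1)} \<and> Phi k y = 0"
    then have y': "a < y" "y < b" "P k y = 0" using Phi_eq unfolding a_def b_def by auto
    show "y = x0"
    proof (rule ccontr)
      assume "y \<noteq> x0"
      then have "y < x0 \<or> x0 < y" by auto
      then show False
      proof
        assume "y < x0" then have "P k y > P k x0" using y' x0 unfolding a_def b_def by (intro P_decr[OF k]) auto
        then show False using y' x0 by simp
      next
        assume "x0 < y" then have "P k x0 > P k y" using y' x0 unfolding a_def b_def by (intro P_decr[OF k]) auto
        then show False using y' x0 by simp
      qed
    qed
  qed
  have "eta_k k \<in> {pi / real k <..< pi / (real k - 1)}"
    using theI'[OF uniq] unfolding eta_k_def by blast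
  then show "pi / real k < eta_k k" "eta_k k < pi / (real k - 1)" by auto
qed




lemma P4_closed:
  assumes c: "cos x > 0"
  shows "P 4 x = sin x * (1 - rr x^2) * (1 - 2 * rr x^4) / rr x^2"
proof -
  have s3: "sin (3 * x) = sin x * (4 * cos x ^ 2 - 1)"
  proof -
    have "sin (3 * x) = sin (2 * x + x)" by simp
    also have "\<dots> = sin x * (4 * cos x ^ 2 - 1)"
      by (simp only: sin_add sin_double cos_double_cos) (simp add: algebra_simps power2_eq_square)
    finally show ?thesis .
  qed
  have e: "(real 4 - 1) * x = 3 * x" "(real 4 - 2) * x = 2 * x" by simp_all
  have "P 4 x = (1 - rr x ^ 4) * (sin x * (4 * cos x ^ 2 - 1)) - rr x ^ 3 * (2 * sin x * cos x) + rr x ^ 4 * sin x"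
    unfolding P_def e s3 sin_double by simp
  also have "\<dots> = sin x * (1 - rr x^2) * (1 - 2 * rr x^4) / rr x^2"
    unfolding rr_def using c by (simp add: field_simps power2_eq_square) (simp add: algebra_simps flip: power_Suc)
  finally show ?thesis .
qed

lemma Phi4_zero_iff:
  assumes x: "pi/4 < x" "x < pi/3"
  shows "Phi 4 x = 0 \<longleftrightarrow> cos x ^ 4 = 1/8"
proof -
  have c2: "cos x > 1/2" using cos_monotone_0_pi[of x "pi/3"] x cos_60 pi_gt_zero by auto
  have c0: "cos x > 0" using c2 by linarith
  have s0: "sin x > 0" using x pi_gt_zero by (intro sin_gt_zero) linarith+
  define R where "R = rr x"
  have R0: "R > 0" unfolding R_def rr_def using c0 by simp
  have R1: "R < 1" unfolding R_def rr_def using c2 by simp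
  have R2: "1 - R^2 > 0" using R0 R1 by (simp add: power_less_one_iff)
  have "Phi 4 x = sin x * (1 - R^2) * (1 - 2 * R^4) / R^2" unfolding R_def Phi_P[OF c0] P4_closed[OF c0] ..
  then have "Phi 4 x = 0 \<longleftrightarrow> R^4 = 1/2" using s0 R0 R2 by auto
  also have "\<dots> \<longleftrightarrow> cos x ^ 4 = 1/8"
  proof -
    have "R^4 = 1 / (16 * cos x ^ 4)" unfolding R_def rr_def by (simp add: power_mult_distrib power_divide)
    moreover have "cos x ^ 4 > 0" using c0 by simp
    moreover have "\<And>y::real. y > 0 \<Longrightarrow> (1/(16*y) = 1/2 \<longleftrightarrow> y = 1/8)"
      by (auto simp: field_simps)
    ultimately show ?thesis by simp
  qed
  finally show ?thesis .
qed

lemma eta4: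
  shows "pi/4 < eta_k 4" "eta_k 4 < pi/3" "cos (eta_k 4) ^ 4 = 1/8"
proof -
  have a: "cos (pi/3) ^ 4 = 1/16" by (simp add: cos_60 power4_eq_xxxx)
  have b: "cos (pi/4) ^ 4 = 1/4"
  proof -
    have "cos (pi/4) ^ 4 = (cos (pi/4)^2)^2" by simp
    also have "cos (pi/4)^2 = 1/2" by (simp add: cos_45 power_divide)
    finally show ?thesis by (simp add: power2_eq_square power_divide)
  qed
  obtain x0 where x0: "pi/4 \<le> x0" "x0 \<le> pi/3" "cos x0 ^ 4 = 1/8"
    using IVT2[of "\<lambda>x. cos x ^ 4" "pi/3" "1/8" "pi/4"] a b by (auto intro!: continuous_intros)
  have "x0 \<noteq> pi/4"
  proof
    assume h: "x0 = pi/4" show False using x0(3) b unfolding h by simp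
  qed
  moreover have "x0 \<noteq> pi/3"
  proof
    assume h: "x0 = pi/3" show False using x0(3) a unfolding h by simp
  qed
  ultimately have x0': "pi/4 < x0" "x0 < pi/3" using x0 by auto
  have i1: "pi / real 4 = pi/4" "pi / (real 4 - 1) = pi/3" by simp_all
  have uniq: "\<exists>!x. x \<in> {pi / real 4 <..< pi / (real 4 - 1)} \<and> Phi 4 x = 0"
  proof (rule ex1I[of _ x0])
    have "Phi 4 x0 = 0" using Phi4_zero_iff[OF x0'] x0(3) by simp
    then show "x0 \<in> {pi / real 4 <..< pi / (real 4 - 1)} \<and> Phi 4 x0 = 0"
      unfolding i1 using x0' by simp
    fix y assume y: "y \<in> {pi / real 4 <..< pi / (real 4 - 1)} \<and> Phi 4 y = 0"
    then have y': "pi/4 < y" "y < pi/3" unfolding i1 by auto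
    then have "cos y ^ 4 = 1/8" using y Phi4_zero_iff[OF y'] by simp
    then have "cos y ^ 4 = cos x0 ^ 4" using x0(3) by simp
    moreover have "cos y \<ge> 0" "cos x0 \<ge> 0" using y' x0' pi_gt_zero by (intro cos_ge_zero; linarith)+
    ultimately have "cos y = cos x0" by (meson power_eq_imp_eq_base zero_less_numeral)
    moreover have "0 \<le> y" "y \<le> pi" "0 \<le> x0" "x0 \<le> pi" using y' x0' pi_gt_zero by linarith+
    ultimately show "y = x0" using cos_inj_pi by blast
  qed
  have "eta_k 4 \<in> {pi / real 4 <..< pi / (real 4 - 1)} \<and> Phi 4 (eta_k 4) = 0"
    unfolding eta_k_def by (rule theI'[OF uniq])
  then have "pi/4 < eta_k 4" "eta_k 4 < pi/3" "Phi 4 (eta_k 4) = 0" unfolding i1 by auto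
  then show "pi/4 < eta_k 4" "eta_k 4 < pi/3" "cos (eta_k 4) ^ 4 = 1/8"
    using Phi4_zero_iff by auto
qed

lemma r4_small:
  assumes "pi/4 \<le> \<eta>" "\<eta> < eta_k 4"
  shows "rr \<eta> ^ 4 < 1/2"
proof -
  note E = eta4
  have "cos (eta_k 4) < cos \<eta>" using assms E by (intro cos_monotone_0_pi) auto
  moreover have "cos (eta_k 4) > 0" using E by (intro cos_gt_zero_pi) auto
  ultimately have "cos (eta_k 4) ^ 4 < cos \<eta> ^ 4" by (intro power_strict_mono) auto
  then have c4: "cos \<eta> ^ 4 > 1/8" using E by simp
  have "rr \<eta> ^ 4 = 1 / (16 * cos \<eta> ^ 4)" unfolding rr_def by (simp add: power_mult_distrib power_divide)
  also have "\<dots> < 1/(16 * (1/8))"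
    using c4 by (intro divide_strict_left_mono) auto
  also have "\<dots> = 1/2" by simp
  finally show ?thesis .
qed




lemma Q_k5:
  assumes k: "k \<ge> 5" and e: "pi / real k \<le> \<eta>" "\<eta> < pi / (real k - 1)"
  shows "rr \<eta> < 1" "rr \<eta> ^ (2*k-2) * (1 + cc \<eta> * rr \<eta>) \<le> 1"
    "\<And>\<alpha>. \<eta> < \<alpha> \<Longrightarrow> \<alpha> \<le> 2*\<eta> \<Longrightarrow> cc \<eta> * rr \<eta> ^ (2*k-1) * sin \<eta> + rr \<eta> * sin (\<alpha> - \<eta>) \<le> sin \<alpha>"
proof -
  have kr: "real k \<ge> 5" using k by simp
  have "0 < pi / real k" using kr by simp
  then have e0: "0 < \<eta>" using e by linarith
  have "pi/(real k - 1) \<le> pi/4" using kr by (intro divide_left_mono) auto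
  then have e4: "\<eta> \<le> pi/4" using e by linarith
  note F = rr_facts[OF e0 e4]
  define r where "r = rr \<eta>"
  define c where "c = cc \<eta>"
  have r0: "r > 0" and r2: "r^2 \<le> 1/2" and rco: "r \<le> cos \<eta>" and co0: "cos \<eta> > 0"
    using F unfolding r_def by auto
  have "r^2 < 1" using r2 by simp
  then have r1': "r < 1" using r0 by (simp add: power_less_one_iff)
  then show r1: "rr \<eta> < 1" using r_def by simp
  have r4: "r^4 \<le> 1/4"
  proof -
    have "r^4 = (r^2)^2" by simp
    also have "\<dots> \<le> (1/2)^2" using r2 r0 by (intro power_mono) auto
    finally show ?thesis by (simp add: power2_eq_square)
  qed
  have cdef: "c = 1 / (1 - r^4)" unfolding c_def r_def using cc_r[OF co0] by simp
  have c43: "c \<le> 4/3" unfolding cdef using r4 by (simp add: divide_le_eq)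
  have c1: "c \<ge> 1" unfolding cdef using r4 r0 by (simp add: le_divide_eq)
  have rp: "r^(2*k-2) \<le> 1/16"
  proof -
    have "2*k-2 = 2*(k-1)" by simp
    then have "r^(2*k-2) = (r^2)^(k-1)" by (simp only: power_mult)
    also have "\<dots> \<le> (1/2)^(k-1)" using r2 r0 by (intro power_mono) auto
    also have "\<dots> \<le> (1/2)^4" using k by (intro power_decreasing) auto
    finally show ?thesis by (simp add: power_divide)
  qed
  have rp0: "r^(2*k-2) \<ge> 0" using r0 by simp
  have "c * r \<le> c" using c1 r1' r0 by (simp add: mult_left_le)
  then have cr: "c * r \<le> 4/3" using c43 by linarith
  have "r^(2*k-2) * (1 + c * r) \<le> (1/16) * (1 + 4/3)" using rp rp0 cr c1 r0
    by (intro mult_mono) auto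
  then show "rr \<eta> ^ (2*k-2) * (1 + cc \<eta> * rr \<eta>) \<le> 1" unfolding r_def c_def by simp
  have crk: "c * r^(2*k-1) \<le> cos \<eta>"
  proof -
    have "2*k-1 = Suc (2*k-2)" using k by simp
    then have "c * r^(2*k-1) = (c * r^(2*k-2)) * r" by simp
    also have "\<dots> \<le> 1 * r"
    proof (rule mult_right_mono)
      have "c * r^(2*k-2) \<le> (4/3) * (1/16)" using c43 rp rp0 by (intro mult_mono) auto
      then show "c * r^(2*k-2) \<le> 1" by simp
    qed (use r0 in simp)
    finally show ?thesis using rco by simp
  qed
  fix \<alpha> assume a: "\<eta> < \<alpha>" "\<alpha> \<le> 2*\<eta>"
  have se: "sin \<eta> \<ge> 0" using e0 e4 by (intro sin_ge_zero) auto
  have sg: "sin (\<alpha> - \<eta>) \<ge> 0" using a e0 e4 by (intro sin_ge_zero) auto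
  have cg: "cos (\<alpha> - \<eta>) \<ge> cos \<eta>" using a e0 e4 by (intro cos_monotone_0_pi_le) auto
  have sa: "sin \<alpha> = sin (\<alpha> - \<eta>) * cos \<eta> + cos (\<alpha> - \<eta>) * sin \<eta>"
    using sin_add[of "\<alpha> - \<eta>" \<eta>] by simp
  have "c * r^(2*k-1) * sin \<eta> + r * sin (\<alpha> - \<eta>) \<le> cos \<eta> * sin \<eta> + cos \<eta> * sin (\<alpha> - \<eta>)"
    using crk rco se sg by (intro add_mono mult_right_mono) auto
  also have "\<dots> \<le> cos (\<alpha> - \<eta>) * sin \<eta> + sin (\<alpha> - \<eta>) * cos \<eta>"
    using mult_right_mono[OF cg se] by (simp add: mult.commute)
  finally show "cc \<eta> * rr \<eta> ^ (2*k-1) * sin \<eta> + rr \<eta> * sin (\<alpha> - \<eta>) \<le> sin \<alpha>"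
    unfolding sa r_def c_def by simp
qed

lemma Q_k4:
  assumes e: "pi/4 \<le> \<eta>" "\<eta> < eta_k 4"
  shows "rr \<eta> < 1" "rr \<eta> ^ 6 * (1 + cc \<eta> * rr \<eta>) \<le> 1"
    "\<eta> < 2*pi - 6*\<eta> \<Longrightarrow> cc \<eta> * rr \<eta> ^ 7 * sin \<eta> + rr \<eta> * sin ((2*pi - 6*\<eta>) - \<eta>) \<le> sin (2*pi - 6*\<eta>)"
proof -
  note E = eta4
  have e3: "\<eta> < pi/3" using e E by linarith
  have e0: "0 < \<eta>" using e pi_gt_zero by linarith
  have co2: "cos \<eta> > 1/2" using cos_monotone_0_pi[of \<eta> "pi/3"] e3 e0 cos_60 pi_gt_zero by auto
  have co0: "cos \<eta> > 0" using co2 by linarith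
  define r where "r = rr \<eta>"
  define c where "c = cc \<eta>"
  have r0: "r > 0" unfolding r_def rr_def using co0 by simp
  have r4: "r^4 < 1/2" unfolding r_def using r4_small[OF e] .
  have rb: "r < 841/1000"
  proof (rule ccontr)
    assume "\<not> r < 841/1000"
    then have "(841/1000)^4 \<le> r^4" by (intro power_mono) auto
    moreover have "(1/2::real) < (841/1000)^4" by (simp add: power_divide)
    ultimately show False using r4 by linarith
  qed
  have r1: "r < 1" using rb by simp
  then show "rr \<eta> < 1" unfolding r_def .
  have r40: "r^4 \<ge> 0" using r0 by simp
  have cdef: "c = 1 / (1 - r^4)" unfolding c_def r_def using cc_r[OF co0] by simp
  have c2: "c \<le> 2" unfolding cdef using r4 by (simp add: divide_le_eq)
  have c1: "c \<ge> 1" unfolding cdef using r4 r40 by (simp add: le_divide_eq)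
  have r7: "r^7 \<le> (841/1000)^7" using r0 rb by (intro power_mono) auto
  have cr7: "c * r^7 \<le> 5952/10000"
  proof -
    have "c * r^7 \<le> 2 * (841/1000)^7" using c2 r7 r0 by (intro mult_mono) auto
    also have "\<dots> \<le> 5952/10000" by (simp add: power_divide)
    finally show ?thesis .
  qed
  have r2: "r^2 \<le> (841/1000)^2" using r0 rb by (intro power_mono) auto
  have r6: "r^6 \<le> 35365/100000"
  proof -
    have "r^6 = r^4 * r^2" by simp
    also have "\<dots> \<le> (1/2) * (841/1000)^2" using r4 r2 r0 by (intro mult_mono) auto
    also have "\<dots> \<le> 35365/100000" by (simp add: power_divide)
    finally show ?thesis .
  qed
  have "r^6 * (1 + c * r) = r^6 + c * r^7" by (simp add: algebra_simps flip: power_Suc)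
  then show "rr \<eta> ^ 6 * (1 + cc \<eta> * rr \<eta>) \<le> 1" using r6 cr7 unfolding r_def c_def by linarith
  assume ea: "\<eta> < 2*pi - 6*\<eta>"
  define \<alpha> where "\<alpha> = 2*pi - 6*\<eta>"
  define g where "g = \<alpha> - \<eta>"
  define t where "t = 2*\<eta> - pi/2"
  define s where "s = sin \<eta>"
  define co where "co = cos \<eta>"
  have g0: "0 < g" using ea unfolding g_def \<alpha>_def by simp
  have g4: "g \<le> pi/4" using e unfolding g_def \<alpha>_def by simp
  have t0: "0 \<le> t" using e unfolding t_def by simp
  have t6: "t \<le> pi" using e3 pi_gt_zero unfolding t_def by linarith
  have sa: "sin \<alpha> = sin g * co + cos g * s" unfolding g_def co_def s_def using sin_add[of "\<alpha> - \<eta>" \<eta>] by simp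
  have st: "sin t = - cos (2*\<eta>)" unfolding t_def by (simp add: sin_diff)
  have c2e: "cos (2*\<eta>) = 2 * co^2 - 1" unfolding co_def by (simp add: cos_double_cos)
  have rco: "r * co = 1/2" unfolding r_def rr_def co_def using co0 by simp
  have cmr: "co - r = - (r * sin t)"
  proof -
    have "r * sin t = r * (1 - 2 * co^2)" using st c2e by simp
    also have "\<dots> = r - 2 * (r * co) * co" by (simp add: algebra_simps power2_eq_square)
    also have "\<dots> = r - co" using rco by simp
    finally show ?thesis by simp
  qed
  have sg0: "0 \<le> sin g" using g0 g4 by (intro sin_ge_zero) auto
  have sgl: "sin g \<le> g" using g0 by (intro sin_x_le_x) auto
  have st0: "0 \<le> sin t" using t0 t6 by (intro sin_ge_zero) auto
  have stl: "sin t \<le> t" using t0 by (intro sin_x_le_x) auto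
  have B1: "(sin g * r) * sin t \<le> g * t"
  proof -
    have "sin g * r \<le> sin g" using sg0 r1 r0 by (simp add: mult_left_le)
    then have "sin g * r \<le> g" using sgl by linarith
    then show ?thesis using st0 stl sg0 r0 g0 by (intro mult_mono) auto
  qed
  have B2: "g * t \<le> pi^2/224"
  proof -
    have "g * t = pi^2/224 - 14 * (\<eta> - pi/4 - pi/56)^2"
      unfolding g_def t_def \<alpha>_def by (simp add: power2_eq_square algebra_simps)
    then show ?thesis by simp
  qed
  have pi2: "pi^2/224 \<le> 441/10000"
  proof -
    have "pi \<le> 31416/10000" using pi_approx(2) by simp
    then have "pi^2 \<le> (31416/10000)^2" using pi_gt_zero by (intro power_mono) auto
    then show ?thesis by (simp add: power_divide)
  qed
  have sq2: "7/10 \<le> sqrt 2 / 2" using sqrt2_bounds by simp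
  have s7: "7/10 \<le> s"
  proof -
    have "sin (pi/4) \<le> sin \<eta>" using e e3 by (intro sin_monotone_2pi_le) auto
    then show ?thesis using sq2 sin_45 s_def by simp
  qed
  have cg7: "7/10 \<le> cos g"
  proof -
    have "cos (pi/4) \<le> cos g" using g0 g4 by (intro cos_monotone_0_pi_le) auto
    then show ?thesis using sq2 cos_45 by simp
  qed
  have B3: "(7/10) * (1/10) \<le> s * (cos g - c * r^7)"
    using s7 cg7 cr7 by (intro mult_mono) auto
  have key: "sin \<alpha> - (c * r^7 * s + r * sin g) = sin g * (co - r) + s * (cos g - c * r^7)"
    unfolding sa by (simp add: algebra_simps)
  have "sin g * (co - r) = - ((sin g * r) * sin t)" unfolding cmr by (simp add: algebra_simps)
  then have "sin \<alpha> - (c * r^7 * s + r * sin g) \<ge> 0" using key B1 B2 pi2 B3 by linarith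
  then show "cc \<eta> * rr \<eta> ^ 7 * sin \<eta> + rr \<eta> * sin ((2*pi - 6*\<eta>) - \<eta>) \<le> sin (2*pi - 6*\<eta>)"
    unfolding r_def c_def s_def g_def \<alpha>_def by simp
qed




lemma conds:
  fixes k :: nat and \<eta> :: real
  assumes k: "k \<ge> 4" and e: "pi / real k \<le> \<eta>" "\<eta> < eta_k k"
  defines "\<alpha> \<equiv> 2*pi - (2*real k - 2)*\<eta>"
  shows "cos \<eta> > 0 \<and> 0 < \<eta> \<and> \<eta> < pi/2 \<and> 0 < \<alpha> \<and> \<alpha> \<le> 2*\<eta> \<and> \<alpha> \<le> pi/2 \<and> rr \<eta> < 1
     \<and> rr \<eta> ^ (2*k-2) * (1 + cc \<eta> * rr \<eta>) \<le> 1
     \<and> (\<eta> < \<alpha> \<longrightarrow> cc \<eta> * rr \<eta> ^ (2*k-1) * sin \<eta> + rr \<eta> * sin (\<alpha> - \<eta>) \<le> sin \<alpha>)"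
proof (cases "k = 4")
  case True
  have e': "pi/4 \<le> \<eta>" "\<eta> < eta_k 4" using e True by auto
  have e3: "\<eta> < pi/3" using e' eta4 by linarith
  have e0: "0 < \<eta>" using e' pi_gt_zero by linarith
  have al: "\<alpha> = 2*pi - 6*\<eta>" unfolding \<alpha>_def True by simp
  have co: "cos \<eta> > 0" using e0 e3 by (intro cos_gt_zero_pi) auto
  have n: "2*k-2 = 6" "2*k-1 = 7" using True by auto
  show ?thesis unfolding n al using co e0 e3 e' Q_k4[OF e'] by auto
next
  case False
  then have k5: "k \<ge> 5" using k by simp
  have kr: "real k \<ge> 5" using k5 by simp
  have e1: "\<eta> < pi / (real k - 1)" using e eta_k_ge5[OF k5] by linarith
  have pk: "0 < pi / real k" using kr by simp
  have e0: "0 < \<eta>" using e pk by linarith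
  have b4: "pi/(real k - 1) \<le> pi/4" using kr by (intro divide_left_mono) auto
  have e4: "\<eta> \<le> pi/4" using e1 b4 by linarith
  have co: "cos \<eta> > 0" using e0 e4 by (intro cos_gt_zero_pi) auto
  have a0: "0 < \<alpha>"
  proof -
    have "(2*real k - 2)*\<eta> < (2*real k - 2) * (pi / (real k - 1))" using e1 kr by (intro mult_strict_left_mono) auto
    also have "\<dots> = 2*pi" using kr by (simp add: field_simps)
    finally show ?thesis unfolding \<alpha>_def by simp
  qed
  have a2: "\<alpha> \<le> 2*\<eta>"
  proof -
    have "real k * (pi / real k) \<le> real k * \<eta>" using e kr by (intro mult_left_mono) auto
    then have "pi \<le> real k * \<eta>" using kr by simp
    then show ?thesis unfolding \<alpha>_def by (simp add: algebra_simps)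
  qed
  have a3: "\<alpha> \<le> pi/2" using a2 e4 by linarith
  have q2: "\<eta> < \<alpha> \<longrightarrow> cc \<eta> * rr \<eta> ^ (2*k-1) * sin \<eta> + rr \<eta> * sin (\<alpha> - \<eta>) \<le> sin \<alpha>"
    using Q_k5(3)[OF k5 e(1) e1, of \<alpha>] a2 by blast
  have e2: "\<eta> < pi/2" using e4 pi_gt_zero by linarith
  show ?thesis using co e0 e2 a0 a2 a3 Q_k5(1,2)[OF k5 e(1) e1] q2 by blast
qed

theorem lemma6p4:
  fixes k :: nat and \<eta> :: real
  assumes "k \<ge> 4"
    and "pi / real k \<le> \<eta>" and "\<eta> < eta_k k"
  shows "(arg0 (zz \<eta> (2*k-3)) \<in> {0<..\<eta>} \<longrightarrow>
            zz \<eta> (2*k-2) \<in> tri 0 (zz \<eta> 0) 1 \<and>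
            zz \<eta> (2*k-1) \<in> tri 0 (zz \<eta> 1) (zz \<eta> 0) \<and>
            ww \<eta> (2*k-2) \<in> tri 1 (ww \<eta> 0) (aa \<eta>) \<and>
            ww \<eta> (2*k-1) \<in> tri 1 (ww \<eta> 1) (ww \<eta> 0))
       \<and> (arg0 (zz \<eta> (2*k-3)) \<in> {\<eta><..2*\<eta>} \<longrightarrow>
            zz \<eta> (2*k-2) \<in> tri 0 1 (zz \<eta> (2*k-3)) \<and>
            zz \<eta> (2*k-1) \<in> tri 0 (zz \<eta> 0) 1 \<and>
            ww \<eta> (2*k-2) \<in> tri 1 (aa \<eta>) (ww \<eta> (2*k-3)) \<and>
            ww \<eta> (2*k-1) \<in> tri 1 (ww \<eta> 0) (aa \<eta>))"
proof -
  define \<alpha> where "\<alpha> = 2*pi - (2*real k - 2)*\<eta>"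
  note C = conds[OF assms, folded \<alpha>_def]
  have co: "cos \<eta> > 0" and e0: "0 < \<eta>" and e2: "\<eta> < pi/2" and a0: "0 < \<alpha>" and a2: "\<alpha> \<le> 2*\<eta>"
    and a3: "\<alpha> \<le> pi/2" and r1: "rr \<eta> < 1" and Q1: "rr \<eta> ^ (2*k-2) * (1 + cc \<eta> * rr \<eta>) \<le> 1"
    and Q2: "\<eta> < \<alpha> \<Longrightarrow> cc \<eta> * rr \<eta> ^ (2*k-1) * sin \<eta> + rr \<eta> * sin (\<alpha> - \<eta>) \<le> sin \<alpha>"
    using C by auto
  note G = geo[OF assms(1) co e0 e2 \<alpha>_def a0 a2 a3 refl r1 refl Q1 Q2]
  show ?thesis using G by auto
qed


end
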